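(* Let $\varepsilon>0$, let $T\in\mathbb{R}$, and let $\{f_i\}_{i\in\mathbb{N}}$ be real-valued queries on datasets such that each $f_i$ is 1-sensitive (i.e. $|f_i(D)-f_i(D')|\le 1$ for all neighboring $D,D'$) and the family has unidirectional sensitivity: for all neighboring datasets $D,D'$, if $f_i(D)>f_i(D')$ for some $i$, then there is no $j$ with $f_j(D)<f_j(D')$. Consider UDSAboveThreshold: on input $D$, sample $\hat T\gets T+\mathrm{Lap}(2/\varepsilon)$; then for $i=1,2,\dots$, sample a fresh $\nu_i\sim\mathrm{Lap}(2/\varepsilon)$; if $f_i(D)+\nu_i\ge\hat T$, output $a_i=\top$ and halt; otherwise output $a_i=\bot$ and continue. Then UDSAboveThreshold (whose output is the stream $a_1,a_2,\dots$) is $\varepsilon$-differentially private.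
   Context: $\mathrm{Lap}(b)$ is the Laplace distribution with mean $0$ and scale $b$, density $\frac{1}{2b}e^{-|x|/b}$; all Laplace samples are independent. Two datasets are neighboring if they differ by replacing the contribution of one individual. A randomized algorithm $M$ is $\varepsilon$-differentially private if for every pair of neighboring datasets $D,D'$ and every set of outcomes $S$, $\Pr[M(D)\in S]\le e^{\varepsilon}\Pr[M(D')\in S]$. *)

theory Defs
  imports "HOL-Probability.Probability"
begin

definition lap :: "real \<Rightarrow> real measure" where
  "lap b = density lborel (\<lambda>x. ennreal (exp (- \<bar>x\<bar> / b) / (2 * b)))"

definition neighboring :: "'a list \<Rightarrow> 'a list \<Rightarrow> bool" where
  "neighboring D D' \<longleftrightarrow> length D = length D' \<and>
     card {i. i < length D \<and> D ! i \<noteq> D' ! i} \<le> 1"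

definition sensitivity_one :: "('d \<Rightarrow> real) \<Rightarrow> ('d \<Rightarrow> 'd \<Rightarrow> bool) \<Rightarrow> bool" where
  "sensitivity_one g nb \<longleftrightarrow> (\<forall>D D'. nb D D' \<longrightarrow> \<bar>g D - g D'\<bar> \<le> 1)"

definition unidirectional :: "(nat \<Rightarrow> 'd \<Rightarrow> real) \<Rightarrow> ('d \<Rightarrow> 'd \<Rightarrow> bool) \<Rightarrow> bool" where
  "unidirectional f nb \<longleftrightarrow>
     (\<forall>D D'. nb D D' \<longrightarrow> (\<exists>i. f i D > f i D') \<longrightarrow> \<not> (\<exists>j. f j D < f j D'))"

text \<open>Transcript of UDSAboveThreshold for threshold noise \<tau> (so \<hat>T = T + \<tau>) and query
  noises \<nu>: entry i is None if the algorithm halted before round i (no output),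
  Some True for \<top>, Some False for \<bottom>.\<close>
definition uds_transcript ::
  "(nat \<Rightarrow> 'd \<Rightarrow> real) \<Rightarrow> real \<Rightarrow> 'd \<Rightarrow> real \<times> (nat \<Rightarrow> real) \<Rightarrow> nat \<Rightarrow> bool option" where
  "uds_transcript f T D = (\<lambda>(\<tau>, \<nu>) i.
     if \<exists>j<i. f j D + \<nu> j \<ge> T + \<tau> then None
     else Some (f i D + \<nu> i \<ge> T + \<tau>))"

definition UDSAboveThreshold ::
  "real \<Rightarrow> (nat \<Rightarrow> 'd \<Rightarrow> real) \<Rightarrow> real \<Rightarrow> 'd \<Rightarrow> (nat \<Rightarrow> bool option) measure" where
  "UDSAboveThreshold \<epsilon> f T D =
     distr (lap (2 / \<epsilon>) \<Otimes>\<^sub>M (\<Pi>\<^sub>M i\<in>(UNIV::nat set). lap (2 / \<epsilon>)))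
           (count_space UNIV) (uds_transcript f T D)"

definition differentially_private ::
  "('d \<Rightarrow> 'o measure) \<Rightarrow> ('d \<Rightarrow> 'd \<Rightarrow> bool) \<Rightarrow> real \<Rightarrow> bool" where
  "differentially_private M nb \<epsilon> \<longleftrightarrow>
     (\<forall>D D'. nb D D' \<longrightarrow>
        (\<forall>S \<in> sets (M D). emeasure (M D) S \<le> ennreal (exp \<epsilon>) * emeasure (M D') S))"

end

theory Submission imports Defs begin

lemma half_half: "(1::ennreal) / 2 + 1 / 2 = 1"
proof -
  have a: "(1::ennreal) / 2 = ennreal (1/2)" using ennreal_divide_numeral[of 1 "num.Bit0 num.One"] by simp
  have "ennreal (1/2 + 1/2) = ennreal (1/2) + ennreal (1/2)" by (rule ennreal_plus) auto
  moreover have "ennreal (1/2 + 1/2) = 1" by simp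
  ultimately have b: "ennreal (1/2) + ennreal (1/2) = 1" by metis
  show ?thesis unfolding a by (rule b)
qed
definition lapd :: "real \<Rightarrow> real \<Rightarrow> real" where
  "lapd b x = exp (- \<bar>x\<bar> / b) / (2 * b)"

lemma lap_eq: "lap b = density lborel (\<lambda>x. ennreal (lapd b x))"
  by (simp add: lap_def lapd_def)

lemma lap_prob:
  assumes b: "b > 0"
  shows "prob_space (lap b)"
proof -
  define l where "l = 1 / b"
  have l: "l > 0" using b by (simp add: l_def)
  let ?e = "\<lambda>x. ennreal (exponential_density l x)"
  have e1: "(\<integral>\<^sup>+ x. ?e x \<partial>lborel) = 1"
  proof -
    interpret prob_space "density lborel ?e" by (rule prob_space_exponential_density[OF l])
    have "emeasure (density lborel ?e) UNIV = 1" using emeasure_space_1 by simp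
    thus ?thesis by (simp add: emeasure_density)
  qed
  have e2: "(\<integral>\<^sup>+ x. ?e (- x) \<partial>lborel) = 1"
    using nn_integral_real_affine[of ?e "-1" 0] e1 by simp
  have ae: "AE x in lborel. ennreal (lapd b x) = ?e x / 2 + ?e (- x) / 2"
    using AE_lborel_singleton[of 0]
  proof eventually_elim
    case (elim x)
    have r: "lapd b x = exponential_density l x / 2 + exponential_density l (- x) / 2"
      using elim b by (auto simp: lapd_def exponential_density_def l_def abs_if)
    have n1: "exponential_density l x \<ge> 0" "exponential_density l (- x) \<ge> 0"
      using l by (auto intro: exponential_density_nonneg)
    show ?case unfolding r using n1
      by (simp add: ennreal_plus[symmetric] ennreal_divide_numeral del: ennreal_plus)
  qed
  have "(\<integral>\<^sup>+ x. ennreal (lapd b x) \<partial>lborel) = (\<integral>\<^sup>+ x. ?e x / 2 + ?e (- x) / 2 \<partial>lborel)"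
    by (rule nn_integral_cong_AE[OF ae])
  also have "\<dots> = (\<integral>\<^sup>+ x. ?e x / 2 \<partial>lborel) + (\<integral>\<^sup>+ x. ?e (- x) / 2 \<partial>lborel)"
    by (rule nn_integral_add) auto
  also have "\<dots> = 1 / 2 + 1 / 2"
    using e1 e2 by (simp add: nn_integral_divide)
  also have "\<dots> = 1" by (rule half_half)
  finally have "(\<integral>\<^sup>+ x. ennreal (lapd b x) \<partial>lborel) = 1" .
  moreover have meas: "(\<lambda>x. ennreal (lapd b x)) \<in> borel_measurable lborel"
    unfolding lapd_def by measurable
  ultimately show ?thesis
    unfolding lap_eq by (intro prob_spaceI) (simp add: emeasure_density[OF meas])
qed


lemma sets_lap[measurable_cong]: "sets (lap b) = sets borel"
  by (simp add: lap_def)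

lemma space_lap[simp]: "space (lap b) = UNIV"
  by (simp add: lap_def)

lemma lapd_shift:
  assumes b: "b > 0"
  shows "lapd b (y - a) \<le> exp (\<bar>a\<bar> / b) * lapd b y"
proof -
  have "- \<bar>y - a\<bar> \<le> \<bar>a\<bar> - \<bar>y\<bar>" by linarith
  then have "(- \<bar>y - a\<bar>) / b \<le> (\<bar>a\<bar> - \<bar>y\<bar>) / b"
    using b by (rule divide_right_mono[OF _ less_imp_le])
  then have "- \<bar>y - a\<bar> / b \<le> \<bar>a\<bar> / b + - \<bar>y\<bar> / b"
    by (simp add: diff_divide_distrib)
  then have "exp (- \<bar>y - a\<bar> / b) \<le> exp (\<bar>a\<bar> / b) * exp (- \<bar>y\<bar> / b)"
    by (simp add: exp_add[symmetric])
  then have "exp (- \<bar>y - a\<bar> / b) / (2 * b) \<le> (exp (\<bar>a\<bar> / b) * exp (- \<bar>y\<bar> / b)) / (2 * b)"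
    by (rule divide_right_mono) (use b in auto)
  then show ?thesis unfolding lapd_def by simp
qed

lemma lap_shift_pair:
  fixes Q :: "'b measure"
  assumes b: "b > 0" and Q: "sigma_finite_measure Q" and E: "E \<in> sets (lap b \<Otimes>\<^sub>M Q)"
  shows "emeasure (lap b \<Otimes>\<^sub>M Q) ((\<lambda>z. (fst z + a, snd z)) -` E \<inter> space (lap b \<Otimes>\<^sub>M Q))
          \<le> ennreal (exp (\<bar>a\<bar> / b)) * emeasure (lap b \<Otimes>\<^sub>M Q) E"
proof -
  interpret Q: sigma_finite_measure Q by (rule Q)
  let ?g = "\<lambda>x. emeasure Q (Pair x -` E)"
  let ?X = "(\<lambda>z. (fst z + a, snd z)) -` E \<inter> space (lap b \<Otimes>\<^sub>M Q)"
  have E': "E \<in> sets (lborel \<Otimes>\<^sub>M Q)"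
    using E by (simp add: sets_pair_measure_cong[OF sets_lap refl])
  have gm: "?g \<in> borel_measurable lborel"
    by (rule Q.measurable_emeasure_Pair[OF E'])
  have lm: "(\<lambda>x. ennreal (lapd b x)) \<in> borel_measurable lborel" unfolding lapd_def by measurable
  have gm': "?g \<in> borel_measurable borel"
    using gm by simp
  have Fm: "(\<lambda>y. ennreal (lapd b (y - a)) * ?g y) \<in> borel_measurable borel"
  proof (rule borel_measurable_times_ennreal[OF _ gm'])
    show "(\<lambda>y. ennreal (lapd b (y - a))) \<in> borel_measurable borel" unfolding lapd_def by measurable
  qed
  have shm: "(\<lambda>z. (fst z + a, snd z)) \<in> measurable (lap b \<Otimes>\<^sub>M Q) (lap b \<Otimes>\<^sub>M Q)"
    by measurable
  have X: "?X \<in> sets (lap b \<Otimes>\<^sub>M Q)"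
    using measurable_sets[OF shm E] by simp
  have Esub: "E \<subseteq> UNIV \<times> space Q"
    using sets.sets_into_space[OF E] by (simp add: space_pair_measure)
  have cut: "Pair x -` ?X = Pair (x + a) -` E" for x
    using Esub by (auto simp: space_pair_measure)
  have "emeasure (lap b \<Otimes>\<^sub>M Q) ?X = (\<integral>\<^sup>+ x. emeasure Q (Pair x -` ?X) \<partial>lap b)"
    by (rule Q.emeasure_pair_measure_alt[OF X])
  also have "\<dots> = (\<integral>\<^sup>+ x. ?g (x + a) \<partial>lap b)"
    by (simp only: cut)
  also have "\<dots> = (\<integral>\<^sup>+ x. ennreal (lapd b x) * ?g (x + a) \<partial>lborel)"
  proof -
    have gs: "(\<lambda>x. ?g (x + a)) \<in> borel_measurable lborel"
      by (rule measurable_compose[OF _ gm]) simp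
    show ?thesis unfolding lap_eq by (rule nn_integral_density[OF lm gs])
  qed
  also have "\<dots> = (\<integral>\<^sup>+ y. ennreal (lapd b (y - a)) * ?g y \<partial>lborel)"
    using nn_integral_real_affine[OF Fm, of 1 a]
    by (simp add: add.commute)
  also have "\<dots> \<le> (\<integral>\<^sup>+ y. ennreal (exp (\<bar>a\<bar> / b)) * (ennreal (lapd b y) * ?g y) \<partial>lborel)"
  proof (rule nn_integral_mono)
    fix y
    have "ennreal (lapd b (y - a)) \<le> ennreal (exp (\<bar>a\<bar> / b)) * ennreal (lapd b y)"
    proof -
      have "ennreal (exp (\<bar>a\<bar> / b) * lapd b y) = ennreal (exp (\<bar>a\<bar> / b)) * ennreal (lapd b y)"
        by (rule ennreal_mult) (use b in \<open>auto simp: lapd_def\<close>)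
      then show ?thesis using ennreal_leI[OF lapd_shift[OF b, of y a]] by simp
    qed
    then show "ennreal (lapd b (y - a)) * ?g y \<le> ennreal (exp (\<bar>a\<bar> / b)) * (ennreal (lapd b y) * ?g y)"
      by (simp add: mult.assoc[symmetric] mult_right_mono)
  qed
  also have "\<dots> = ennreal (exp (\<bar>a\<bar> / b)) * (\<integral>\<^sup>+ y. ennreal (lapd b y) * ?g y \<partial>lborel)"
    by (rule nn_integral_cmult[OF borel_measurable_times_ennreal[OF lm gm]])
  also have "(\<integral>\<^sup>+ y. ennreal (lapd b y) * ?g y \<partial>lborel) = (\<integral>\<^sup>+ x. ?g x \<partial>lap b)"
    unfolding lap_eq by (rule nn_integral_density[OF lm gm, symmetric])
  also have "(\<integral>\<^sup>+ x. ?g x \<partial>lap b) = emeasure (lap b \<Otimes>\<^sub>M Q) E"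
    by (rule Q.emeasure_pair_measure_alt[OF E, symmetric])
  finally show ?thesis .
qed

lemma insert_coord_measurable:
  shows "(\<lambda>z. (snd z)(k := fst z)) \<in> measurable (M \<Otimes>\<^sub>M (\<Pi>\<^sub>M i\<in>(UNIV::nat set). M)) (\<Pi>\<^sub>M i\<in>(UNIV::nat set). M)"
proof (rule measurable_PiM_single')
  fix i :: nat
  show "(\<lambda>z. ((snd z)(k := fst z)) i) \<in> measurable (M \<Otimes>\<^sub>M (\<Pi>\<^sub>M i\<in>(UNIV::nat set). M)) M"
    by (cases "i = k") simp_all
qed (auto simp: space_pair_measure space_PiM PiE_iff)

lemma PiM_insert_coord:
  assumes M: "prob_space M"
  shows "distr (M \<Otimes>\<^sub>M (\<Pi>\<^sub>M i\<in>(UNIV::nat set). M)) (\<Pi>\<^sub>M i\<in>(UNIV::nat set). M) (\<lambda>z. (snd z)(k := fst z))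
     = (\<Pi>\<^sub>M i\<in>(UNIV::nat set). M)" (is "?D = ?S")
proof -
  interpret P: product_prob_space "\<lambda>_. M" "UNIV::nat set"
    by (simp add: product_prob_space_def product_prob_space_axioms_def product_sigma_finite_def M
        prob_space_imp_sigma_finite)
  have PSf: "sigma_finite_measure ?S"
    by (rule prob_space_imp_sigma_finite) (rule P.P.prob_space_axioms)
  show ?thesis
  proof (rule P.PiM_eq)
    show "sets ?D = sets ?S" by simp
    fix J F assume J: "finite J" "J \<subseteq> (UNIV::nat set)" "\<And>j. j \<in> J \<Longrightarrow> F j \<in> sets M"
    let ?X = "prod_emb UNIV (\<lambda>_. M) J (Pi\<^sub>E J F)"
    have Fsp: "\<And>j. j \<in> J \<Longrightarrow> F j \<subseteq> space M" using J(3) sets.sets_into_space by blast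
    have X: "?X \<in> sets ?S" using J by (auto intro!: sets_PiM_I)
    have "emeasure ?D ?X = emeasure (M \<Otimes>\<^sub>M ?S) ((\<lambda>z. (snd z)(k := fst z)) -` ?X \<inter> space (M \<Otimes>\<^sub>M ?S))"
      by (rule emeasure_distr[OF insert_coord_measurable X])
    also have "\<dots> = (\<Prod>j\<in>J. emeasure M (F j))"
    proof (cases "k \<in> J")
      case True
      let ?Y = "prod_emb UNIV (\<lambda>_. M) (J - {k}) (Pi\<^sub>E (J - {k}) F)"
      have "(\<lambda>z. (snd z)(k := fst z)) -` ?X \<inter> space (M \<Otimes>\<^sub>M ?S) = F k \<times> ?Y"
        using True Fsp[OF True] by (auto simp: prod_emb_def space_pair_measure space_PiM PiE_iff split: if_splits)
      moreover have "emeasure (M \<Otimes>\<^sub>M ?S) (F k \<times> ?Y) = emeasure M (F k) * emeasure ?S ?Y"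
        using J True by (intro sigma_finite_measure.emeasure_pair_measure_Times[OF PSf] sets_PiM_I) auto
      moreover have "emeasure ?S ?Y = (\<Prod>j\<in>J - {k}. emeasure M (F j))"
        using J by (intro P.emeasure_PiM_emb) auto
      ultimately show ?thesis using True J(1) by (simp add: prod.remove)
    next
      case False
      have "(\<lambda>z. (snd z)(k := fst z)) -` ?X \<inter> space (M \<Otimes>\<^sub>M ?S) = space M \<times> ?X"
        using False by (auto simp: prod_emb_def space_pair_measure space_PiM PiE_iff split: if_splits)
      moreover have "emeasure (M \<Otimes>\<^sub>M ?S) (space M \<times> ?X) = emeasure M (space M) * emeasure ?S ?X"
        using X by (intro sigma_finite_measure.emeasure_pair_measure_Times[OF PSf]) auto
      moreover have "emeasure ?S ?X = (\<Prod>j\<in>J. emeasure M (F j))"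
        using J by (intro P.emeasure_PiM_emb) auto
      ultimately show ?thesis using prob_space.emeasure_space_1[OF M] by simp
    qed
    finally show "emeasure ?D ?X = (\<Prod>j\<in>J. emeasure M (F j))" .
  qed
qed

abbreviation "Sq b \<equiv> (\<Pi>\<^sub>M i\<in>(UNIV::nat set). lap b)"

lemma space_Sq[simp]: "space (Sq b) = UNIV"
  by (simp add: space_PiM)

lemma Sq_prob:
  assumes b: "b > 0" shows "prob_space (Sq b)"
proof -
  interpret P: product_prob_space "\<lambda>_. lap b" "UNIV::nat set"
    using lap_prob[OF b]
    by (simp add: product_prob_space_def product_prob_space_axioms_def product_sigma_finite_def
        prob_space_imp_sigma_finite)
  show ?thesis by (rule P.P.prob_space_axioms)
qed

lemma sh_measurable: "(\<lambda>w::nat \<Rightarrow> real. w(k := w k + a)) \<in> measurable (Sq b) (Sq b)"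
proof (rule measurable_PiM_single')
  fix i :: nat
  show "(\<lambda>w. (w(k := w k + a)) i) \<in> measurable (Sq b) (lap b)"
    by (cases "i = k") simp_all
qed (auto simp: space_PiM)

lemma Sq_shift:
  assumes b: "b > 0" and F: "F \<in> sets (Sq b)"
  shows "emeasure (Sq b) ((\<lambda>w. w(k := w k + a)) -` F)
          \<le> ennreal (exp (\<bar>a\<bar> / b)) * emeasure (Sq b) F"
proof -
  let ?g = "\<lambda>z::real \<times> (nat \<Rightarrow> real). (snd z)(k := fst z)"
  let ?sh = "\<lambda>w::nat \<Rightarrow> real. w(k := w k + a)"
  let ?P = "lap b \<Otimes>\<^sub>M Sq b"
  have D: "distr ?P (Sq b) ?g = Sq b"
    by (rule PiM_insert_coord[OF lap_prob[OF b]])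
  have gm: "?g \<in> measurable ?P (Sq b)" by (rule insert_coord_measurable)
  have shm: "?sh \<in> measurable (Sq b) (Sq b)" by (rule sh_measurable)
  have G: "?sh -` F \<in> sets (Sq b)"
    using measurable_sets[OF shm F] by simp
  have E: "?g -` F \<inter> space ?P \<in> sets ?P"
    using measurable_sets[OF gm F] .
  have "emeasure (Sq b) (?sh -` F) = emeasure (distr ?P (Sq b) ?g) (?sh -` F)"
    using D by simp
  also have "\<dots> = emeasure ?P (?g -` (?sh -` F) \<inter> space ?P)"
    by (rule emeasure_distr[OF gm G])
  also have "?g -` (?sh -` F) \<inter> space ?P = (\<lambda>z. (fst z + a, snd z)) -` (?g -` F \<inter> space ?P) \<inter> space ?P"
    by (auto simp: space_pair_measure)
  also have "emeasure ?P \<dots> \<le> ennreal (exp (\<bar>a\<bar> / b)) * emeasure ?P (?g -` F \<inter> space ?P)"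
    by (rule lap_shift_pair[OF b prob_space_imp_sigma_finite[OF Sq_prob[OF b]] E])
  also have "emeasure ?P (?g -` F \<inter> space ?P) = emeasure (distr ?P (Sq b) ?g) F"
    by (rule emeasure_distr[OF gm F, symmetric])
  also have "\<dots> = emeasure (Sq b) F" using D by simp
  finally show ?thesis .
qed


abbreviation "Om b \<equiv> lap b \<Otimes>\<^sub>M Sq b"

lemma space_Om: "space (Om b) = UNIV"
  by (simp add: space_pair_measure)

lemma Om_shift:
  assumes b: "b > 0" and E: "E \<in> sets (Om b)"
  shows "emeasure (Om b) ((\<lambda>z. (fst z + a, (snd z)(k := snd z k + a'))) -` E)
          \<le> ennreal (exp (\<bar>a'\<bar> / b)) * (ennreal (exp (\<bar>a\<bar> / b)) * emeasure (Om b) E)"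
proof -
  let ?sh = "\<lambda>w::nat \<Rightarrow> real. w(k := w k + a')"
  let ?E' = "(\<lambda>z. (fst z + a, snd z)) -` E"
  have Sf: "sigma_finite_measure (Sq b)" by (rule prob_space_imp_sigma_finite[OF Sq_prob[OF b]])
  have tm: "(\<lambda>z. (fst z + a, snd z)) \<in> measurable (Om b) (Om b)" by measurable
  have E': "?E' \<in> sets (Om b)"
    using measurable_sets[OF tm E] by (simp add: space_Om)
  have nm: "(\<lambda>z. (fst z, ?sh (snd z))) \<in> measurable (Om b) (Om b)"
    by (intro measurable_Pair measurable_fst measurable_compose[OF measurable_snd sh_measurable])
  have E'': "(\<lambda>z. (fst z, ?sh (snd z))) -` ?E' \<in> sets (Om b)"
    using measurable_sets[OF nm E'] by (simp add: space_Om)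
  have "(\<lambda>z. (fst z + a, (snd z)(k := snd z k + a'))) -` E = (\<lambda>z. (fst z, ?sh (snd z))) -` ?E'"
    by auto
  then have "emeasure (Om b) ((\<lambda>z. (fst z + a, (snd z)(k := snd z k + a'))) -` E)
      = emeasure (Om b) ((\<lambda>z. (fst z, ?sh (snd z))) -` ?E')" by simp
  also have "\<dots> = (\<integral>\<^sup>+ x. emeasure (Sq b) (Pair x -` ((\<lambda>z. (fst z, ?sh (snd z))) -` ?E')) \<partial>lap b)"
    by (rule sigma_finite_measure.emeasure_pair_measure_alt[OF Sf E''])
  also have "\<dots> = (\<integral>\<^sup>+ x. emeasure (Sq b) (?sh -` (Pair x -` ?E')) \<partial>lap b)"
    by (simp add: vimage_def)
  also have "\<dots> \<le> (\<integral>\<^sup>+ x. ennreal (exp (\<bar>a'\<bar> / b)) * emeasure (Sq b) (Pair x -` ?E') \<partial>lap b)"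
    by (rule nn_integral_mono) (rule Sq_shift[OF b sets_Pair1[OF E']])
  also have "\<dots> = ennreal (exp (\<bar>a'\<bar> / b)) * (\<integral>\<^sup>+ x. emeasure (Sq b) (Pair x -` ?E') \<partial>lap b)"
    by (rule nn_integral_cmult) (rule sigma_finite_measure.measurable_emeasure_Pair[OF Sf E'])
  also have "(\<integral>\<^sup>+ x. emeasure (Sq b) (Pair x -` ?E') \<partial>lap b) = emeasure (Om b) ?E'"
    by (rule sigma_finite_measure.emeasure_pair_measure_alt[OF Sf E', symmetric])
  also have "emeasure (Om b) ?E' \<le> ennreal (exp (\<bar>a\<bar> / b)) * emeasure (Om b) E"
    using lap_shift_pair[OF b Sf E, of a] by (simp add: space_Om)
  finally show ?thesis by (simp add: mult_left_mono fun_upd_def)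
qed


definition Hh :: "(nat \<Rightarrow> 'd \<Rightarrow> real) \<Rightarrow> real \<Rightarrow> 'd \<Rightarrow> real \<times> (nat \<Rightarrow> real) \<Rightarrow> nat option" where
  "Hh f T D z = (if \<exists>j. T + fst z \<le> f j D + snd z j then Some (LEAST j. T + fst z \<le> f j D + snd z j) else None)"

definition dec :: "nat option \<Rightarrow> nat \<Rightarrow> bool option" where
  "dec oc = (case oc of None \<Rightarrow> (\<lambda>i. Some False)
      | Some k \<Rightarrow> (\<lambda>i. if i < k then Some False else if i = k then Some True else None))"

definition Ev :: "(nat \<Rightarrow> 'd \<Rightarrow> real) \<Rightarrow> real \<Rightarrow> 'd \<Rightarrow> nat option \<Rightarrow> (real \<times> (nat \<Rightarrow> real)) set" where
  "Ev f T D oc = (case oc of None \<Rightarrow> {z. \<forall>j. f j D + snd z j < T + fst z}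
      | Some k \<Rightarrow> {z. (\<forall>j<k. f j D + snd z j < T + fst z) \<and> T + fst z \<le> f k D + snd z k})"

lemma Hh_vimage: "Hh f T D -` {oc} = Ev f T D oc"
proof (cases oc)
  case None
  then show ?thesis by (auto simp: Hh_def Ev_def not_le split: if_splits)
next
  case (Some k)
  show ?thesis
  proof (intro set_eqI iffI)
    fix z assume "z \<in> Hh f T D -` {oc}"
    then have ex: "\<exists>j. T + fst z \<le> f j D + snd z j" and k: "(LEAST j. T + fst z \<le> f j D + snd z j) = k"
      using Some by (auto simp: Hh_def split: if_splits)
    have "T + fst z \<le> f k D + snd z k" using LeastI_ex[OF ex] k by simp
    moreover have "\<forall>j<k. f j D + snd z j < T + fst z"
    proof (intro allI impI)
      fix j assume "j < k"
      then have "\<not> (T + fst z \<le> f j D + snd z j)"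
        using not_less_Least[of j "\<lambda>j. T + fst z \<le> f j D + snd z j"] k by simp
      then show "f j D + snd z j < T + fst z" by simp
    qed
    ultimately show "z \<in> Ev f T D oc" using Some by (simp add: Ev_def)
  next
    fix z assume "z \<in> Ev f T D oc"
    then have a: "\<forall>j<k. f j D + snd z j < T + fst z" and b: "T + fst z \<le> f k D + snd z k"
      using Some by (auto simp: Ev_def)
    have "(LEAST j. T + fst z \<le> f j D + snd z j) = k"
    proof (rule Least_equality)
      show "T + fst z \<le> f k D + snd z k" by (rule b)
      fix y assume y: "T + fst z \<le> f y D + snd z y"
      show "k \<le> y"
      proof (rule ccontr)
        assume "\<not> k \<le> y"
        then have "y < k" by simp
        then have "f y D + snd z y < T + fst z" using a by blast
        then show False using y by linarith
      qed
    qed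
    then show "z \<in> Hh f T D -` {oc}" using Some b by (auto simp: Hh_def)
  qed
qed

lemma uds_eq: "uds_transcript f T D z = dec (Hh f T D z)"
proof (cases "Hh f T D z")
  case None
  then have "z \<in> Ev f T D None" using Hh_vimage[of f T D None] by blast
  then have "\<forall>j. \<not> (T + fst z \<le> f j D + snd z j)" by (auto simp: Ev_def not_le)
  then show ?thesis using None by (cases z) (auto simp: uds_transcript_def dec_def)
next
  case (Some k)
  then have "z \<in> Ev f T D (Some k)" using Hh_vimage[of f T D "Some k"] by blast
  then have a: "\<forall>j<k. f j D + snd z j < T + fst z" and b: "T + fst z \<le> f k D + snd z k"
    by (auto simp: Ev_def)
  show ?thesis
  proof (rule ext)
    fix i
    have u: "uds_transcript f T D z i = (if \<exists>j<i. T + fst z \<le> f j D + snd z j then None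
        else Some (T + fst z \<le> f i D + snd z i))"
      by (cases z) (simp add: uds_transcript_def)
    have d: "dec (Hh f T D z) i = (if i < k then Some False else if i = k then Some True else None)"
      using Some by (simp add: dec_def)
    consider "i < k" | "i = k" | "k < i" by linarith
    then show "uds_transcript f T D z i = dec (Hh f T D z) i"
    proof cases
      case 1
      then have "\<not> (\<exists>j<i. T + fst z \<le> f j D + snd z j)" using a by (meson less_trans not_le)
      moreover have "\<not> (T + fst z \<le> f i D + snd z i)" using a 1 by (meson not_le)
      ultimately show ?thesis unfolding u d using 1 by simp
    next
      case 2
      then have "\<not> (\<exists>j<i. T + fst z \<le> f j D + snd z j)" using a by (meson not_le)
      then show ?thesis unfolding u d using 2 b by simp
    next
      case 3
      then have "\<exists>j<i. T + fst z \<le> f j D + snd z j" using b by blast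
      then show ?thesis unfolding u d using 3 by simp
    qed
  qed
qed

lemma X1: "(\<lambda>z. snd z j) \<in> borel_measurable (Om b)"
proof -
  have "(\<lambda>w::nat\<Rightarrow>real. w j) \<in> measurable (Sq b) (lap b)" by (rule measurable_component_singleton) simp
  then have "(\<lambda>w::nat\<Rightarrow>real. w j) \<in> borel_measurable (Sq b)" by (simp add: measurable_cong_sets[OF refl sets_lap])
  then show ?thesis by (rule measurable_compose[OF measurable_snd])
qed

lemma X2: "(\<lambda>z. fst z) \<in> borel_measurable (Om b)"
  by (rule measurable_compose[OF measurable_fst]) (simp add: measurable_cong_sets[OF refl sets_lap])

lemma Xlt: "{z. f j D + snd z j < T + fst z} \<in> sets (Om b)"
proof -
  have "{z \<in> space (Om b). f j D + snd z j < T + fst z} \<in> sets (Om b)"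
    using X1[of j b] X2[of b] by measurable
  then show ?thesis by (simp add: space_Om)
qed

lemma Xle: "{z. T + fst z \<le> f k D + snd z k} \<in> sets (Om b)"
proof -
  have "{z \<in> space (Om b). T + fst z \<le> f k D + snd z k} \<in> sets (Om b)"
    using X1[of k b] X2[of b] by measurable
  then show ?thesis by (simp add: space_Om)
qed

lemma Ev_sets: "Ev f T D oc \<in> sets (Om b)"
proof -
  have top: "UNIV \<in> sets (Om b)" using sets.top[of "Om b"] by (simp add: space_Om)
  show ?thesis
  proof (cases oc)
    case None
    have "Ev f T D oc = (\<Inter>j\<in>UNIV. {z. f j D + snd z j < T + fst z})"
      using None by (auto simp: Ev_def)
    also have "\<dots> \<in> sets (Om b)"
      by (rule sets.countable_INT''[OF top]) (auto intro: Xlt)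
    finally show ?thesis .
  next
    case (Some k)
    have "Ev f T D oc = (\<Inter>j\<in>{..<k}. {z. f j D + snd z j < T + fst z}) \<inter> {z. T + fst z \<le> f k D + snd z k}"
      using Some by (auto simp: Ev_def)
    also have "\<dots> \<in> sets (Om b)"
      by (intro sets.Int sets.countable_INT''[OF top] Xle Xlt) auto
    finally show ?thesis .
  qed
qed

lemma Hh_meas: "Hh f T D \<in> measurable (Om b) (count_space UNIV)"
proof (subst measurable_count_space_eq2_countable, intro conjI ballI)
  fix oc :: "nat option"
  show "Hh f T D -` {oc} \<inter> space (Om b) \<in> sets (Om b)"
    by (simp add: Hh_vimage space_Om Ev_sets)
qed auto


lemma incl_Some:
  assumes "\<forall>j. f j D' \<le> f j D + a" "f k D + a \<le> f k D' + 1"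
  shows "Ev f T D (Some k) \<subseteq> (\<lambda>z. (fst z + a, (snd z)(k := snd z k + 1))) -` Ev f T D' (Some k)"
proof
  fix z assume "z \<in> Ev f T D (Some k)"
  then have h1: "\<forall>j<k. f j D + snd z j < T + fst z" and h2: "T + fst z \<le> f k D + snd z k"
    by (auto simp: Ev_def)
  have "\<forall>j<k. f j D' + ((snd z)(k := snd z k + 1)) j < T + (fst z + a)"
  proof (intro allI impI)
    fix j assume j: "j < k"
    then have "((snd z)(k := snd z k + 1)) j = snd z j" by simp
    moreover have "f j D' \<le> f j D + a" using assms(1) by blast
    moreover have "f j D + snd z j < T + fst z" using h1 j by blast
    ultimately show "f j D' + ((snd z)(k := snd z k + 1)) j < T + (fst z + a)" by linarith
  qed
  moreover have "T + (fst z + a) \<le> f k D' + ((snd z)(k := snd z k + 1)) k"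
    using h2 assms(2) by simp
  ultimately show "z \<in> (\<lambda>z. (fst z + a, (snd z)(k := snd z k + 1))) -` Ev f T D' (Some k)"
    by (simp add: Ev_def)
qed

lemma incl_None:
  assumes "\<forall>j. f j D' \<le> f j D + a"
  shows "Ev f T D None \<subseteq> (\<lambda>z. (fst z + a, (snd z)(0 := snd z 0 + 0))) -` Ev f T D' None"
proof
  fix z assume "z \<in> Ev f T D None"
  then have h1: "\<forall>j. f j D + snd z j < T + fst z" by (auto simp: Ev_def)
  have "\<forall>j. f j D' + snd z j < T + (fst z + a)"
  proof
    fix j
    have "f j D' \<le> f j D + a" using assms(1) by blast
    moreover have "f j D + snd z j < T + fst z" using h1 by blast
    ultimately show "f j D' + snd z j < T + (fst z + a)" by linarith
  qed
  then show "z \<in> (\<lambda>z. (fst z + a, (snd z)(0 := snd z 0 + 0))) -` Ev f T D' None"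
    by (simp add: Ev_def)
qed

lemma bound_shift:
  assumes b: "b > 0" and a: "\<bar>a\<bar> \<le> 1" and a': "\<bar>a'\<bar> \<le> 1" and E': "E' \<in> sets (Om b)"
    and sub: "E \<subseteq> (\<lambda>z. (fst z + a, (snd z)(k := snd z k + a'))) -` E'"
  shows "emeasure (Om b) E \<le> ennreal (exp (1 / b)) * (ennreal (exp (1 / b)) * emeasure (Om b) E')"
proof -
  let ?t = "\<lambda>z::real \<times> (nat \<Rightarrow> real). (fst z + a, (snd z)(k := snd z k + a'))"
  have tm: "?t \<in> measurable (Om b) (Om b)"
    by (intro measurable_Pair measurable_compose[OF measurable_snd sh_measurable]) measurable
  have V: "?t -` E' \<in> sets (Om b)"
    using measurable_sets[OF tm E'] by (simp add: space_Om)
  have "emeasure (Om b) E \<le> emeasure (Om b) (?t -` E')"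
    by (rule emeasure_mono[OF sub V])
  also have "\<dots> \<le> ennreal (exp (\<bar>a'\<bar> / b)) * (ennreal (exp (\<bar>a\<bar> / b)) * emeasure (Om b) E')"
    by (rule Om_shift[OF b E'])
  also have "\<dots> \<le> ennreal (exp (1 / b)) * (ennreal (exp (1 / b)) * emeasure (Om b) E')"
  proof -
    have x: "ennreal (exp (\<bar>c\<bar> / b)) \<le> ennreal (exp (1 / b))" if "\<bar>c\<bar> \<le> 1" for c
      using that b by (intro ennreal_leI) (simp add: divide_right_mono)
    show ?thesis
      by (intro mult_mono x a a' order.refl) auto
  qed
  finally show ?thesis .
qed


theorem theorem4p1:
  fixes \<epsilon> T :: real and f :: "nat \<Rightarrow> 'a list \<Rightarrow> real"
  assumes "\<epsilon> > 0"
    and "\<And>i. sensitivity_one (f i) neighboring"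
    and "unidirectional f neighboring"
  shows "differentially_private (UDSAboveThreshold \<epsilon> f T) neighboring \<epsilon>"
proof -
  define b where "b = 2 / \<epsilon>"
  have b: "b > 0" using assms(1) by (simp add: b_def)
  have eb: "ennreal (exp (1 / b)) * (ennreal (exp (1 / b)) * x) = ennreal (exp \<epsilon>) * x" for x
  proof -
    have "exp (1 / b) * exp (1 / b) = exp \<epsilon>"
      using assms(1) by (simp add: b_def exp_add[symmetric])
    then show ?thesis
      by (simp add: mult.assoc[symmetric] ennreal_mult[symmetric])
  qed
  have UDS: "UDSAboveThreshold \<epsilon> f T D = distr (Om b) (count_space UNIV) (uds_transcript f T D)" for D
    by (simp add: UDSAboveThreshold_def b_def)
  have rep: "emeasure (UDSAboveThreshold \<epsilon> f T D) S
      = (\<integral>\<^sup>+ oc. emeasure (Om b) (Ev f T D oc) \<partial>count_space (dec -` S))" for D S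
  proof -
    have ueq: "uds_transcript f T D = dec \<circ> Hh f T D"
      by (rule ext) (simp add: uds_eq)
    have um: "uds_transcript f T D \<in> measurable (Om b) (count_space UNIV)"
      unfolding ueq by (rule measurable_comp[OF Hh_meas]) simp
    have "emeasure (UDSAboveThreshold \<epsilon> f T D) S
        = emeasure (Om b) (uds_transcript f T D -` S \<inter> space (Om b))"
      unfolding UDS by (rule emeasure_distr[OF um]) simp
    also have "uds_transcript f T D -` S \<inter> space (Om b) = (\<Union>oc\<in>dec -` S. Ev f T D oc)"
      by (auto simp: ueq space_Om Hh_vimage[symmetric])
    also have "emeasure (Om b) \<dots> = (\<integral>\<^sup>+ oc. emeasure (Om b) (Ev f T D oc) \<partial>count_space (dec -` S))"
    proof (rule emeasure_UN_countable)
      show "\<And>oc. oc \<in> dec -` S \<Longrightarrow> Ev f T D oc \<in> sets (Om b)" by (rule Ev_sets)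
      show "countable (dec -` S)" by (rule countableI_type)
      show "disjoint_family_on (Ev f T D) (dec -` S)"
        by (auto simp: disjoint_family_on_def Hh_vimage[symmetric])
    qed
    finally show ?thesis .
  qed
  show ?thesis
    unfolding differentially_private_def
  proof (intro allI impI ballI)
    fix D D' :: "'a list" and S
    assume nb: "neighboring D D'"
    have sens: "\<bar>f i D - f i D'\<bar> \<le> 1" for i
      using assms(2)[of i] nb by (simp add: sensitivity_one_def)
    have dir: "(\<forall>i. f i D' \<le> f i D) \<or> (\<forall>i. f i D \<le> f i D')"
      using assms(3) nb unfolding unidirectional_def by (metis not_le)
    have pw: "emeasure (Om b) (Ev f T D oc) \<le> ennreal (exp \<epsilon>) * emeasure (Om b) (Ev f T D' oc)" for oc
    proof -
      obtain a a' k where a: "\<bar>a\<bar> \<le> 1" and a': "\<bar>a'\<bar> \<le> 1"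
        and sub: "Ev f T D oc \<subseteq> (\<lambda>z. (fst z + a, (snd z)(k := snd z k + a'))) -` Ev f T D' oc"
      proof (cases oc)
        case None
        show ?thesis
        proof (cases "\<forall>i. f i D' \<le> f i D")
          case True
          then have "\<forall>j. f j D' \<le> f j D + 0" by simp
          from incl_None[OF this] show ?thesis using None by (intro that[of 0 0 0]) auto
        next
          case False
          have "\<forall>j. f j D' \<le> f j D + 1"
          proof
            fix j show "f j D' \<le> f j D + 1" using sens[of j] by (simp add: abs_le_iff)
          qed
          from incl_None[OF this] show ?thesis using None by (intro that[of 1 0 0]) auto
        qed
      next
        case (Some k)
        show ?thesis
        proof (cases "\<forall>i. f i D' \<le> f i D")
          case True
          then have "\<forall>j. f j D' \<le> f j D + 0" by simp
          moreover have "f k D + 0 \<le> f k D' + 1" using sens[of k] by (simp add: abs_le_iff)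
          ultimately have "Ev f T D (Some k) \<subseteq> (\<lambda>z. (fst z + 0, (snd z)(k := snd z k + 1))) -` Ev f T D' (Some k)"
            by (rule incl_Some)
          then show ?thesis using Some by (intro that[of 0 1 k]) auto
        next
          case False
          then have B: "\<forall>i. f i D \<le> f i D'" using dir by blast
          have "\<forall>j. f j D' \<le> f j D + 1"
          proof
            fix j show "f j D' \<le> f j D + 1" using sens[of j] by (simp add: abs_le_iff)
          qed
          moreover have "f k D + 1 \<le> f k D' + 1" using B by simp
          ultimately have "Ev f T D (Some k) \<subseteq> (\<lambda>z. (fst z + 1, (snd z)(k := snd z k + 1))) -` Ev f T D' (Some k)"
            by (rule incl_Some)
          then show ?thesis using Some by (intro that[of 1 1 k]) auto
        qed
      qed
      have "emeasure (Om b) (Ev f T D oc) \<le> ennreal (exp (1 / b)) * (ennreal (exp (1 / b)) * emeasure (Om b) (Ev f T D' oc))"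
        by (rule bound_shift[OF b a a' Ev_sets sub])
      then show ?thesis by (simp only: eb)
    qed
    have "emeasure (UDSAboveThreshold \<epsilon> f T D) S
        = (\<integral>\<^sup>+ oc. emeasure (Om b) (Ev f T D oc) \<partial>count_space (dec -` S))" by (rule rep)
    also have "\<dots> \<le> (\<integral>\<^sup>+ oc. ennreal (exp \<epsilon>) * emeasure (Om b) (Ev f T D' oc) \<partial>count_space (dec -` S))"
      by (rule nn_integral_mono) (rule pw)
    also have "\<dots> = ennreal (exp \<epsilon>) * (\<integral>\<^sup>+ oc. emeasure (Om b) (Ev f T D' oc) \<partial>count_space (dec -` S))"
      by (rule nn_integral_cmult) simp
    also have "\<dots> = ennreal (exp \<epsilon>) * emeasure (UDSAboveThreshold \<epsilon> f T D') S"
      by (simp only: rep)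
    finally show "emeasure (UDSAboveThreshold \<epsilon> f T D) S \<le> ennreal (exp \<epsilon>) * emeasure (UDSAboveThreshold \<epsilon> f T D') S" .
  qed
qed

end
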